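(* Let $(\Omega,\mathcal F,Q,(\mathcal F_t)_{t=0}^T)$ be a filtered probability space, $\pi>0$, and $t\in\{0,\dots,T-1\}$. Suppose $c_t:\mathbb R\times\Omega\to\mathbb R$ is $\mathcal B(\mathbb R)\otimes\mathcal F_t$-measurable with $a\mapsto c_t(a)(\omega)$ non-decreasing and continuous, and $\alpha_{t+1}:\mathbb R\times\Omega\to[0,\pi]$ is $\mathcal B(\mathbb R)\otimes\mathcal F$-measurable with $g\mapsto\alpha_{t+1}(g)(\omega)$ non-decreasing for all $\omega\in\Omega$. Let $Q_t$ be a regular version of the $\mathcal F_t$-conditional distribution of $Q$, and let $\varepsilon_{t+1}$ be a random variable such that for each $\omega\in\Omega$ the map $\mathbb R\to[0,\pi]$, $x\mapsto\int_\Omega\alpha_{t+1}(x+\varepsilon_{t+1}(\omega'))(\omega')\,Q_t(d\omega')(\omega)$ is continuous. Then: (i) there exists a unique $\mathcal B(\mathbb R)\otimes\mathcal F_t$-measurable $[0,\pi]$-valued $\alpha_t$ satisfying $$\alpha_t(g)(\omega)=\mathbb E^Q_t\big(\alpha_{t+1}(g-c_t(\alpha_t(g))+\varepsilon_{t+1})\big)(\omega)\quad\text{for all }g\in\mathbb R\text{ and almost all }\omega\in\Omega;$$ (ii) the map $\mathbb R\to[0,\pi]$, $g\mapsto\alpha_t(g)(\omega)$, is non-decreasing and continuous for all $\omega\in\Omega$.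
   Context: $\mathbb E^Q_t$ denotes conditional expectation under $Q$ given $\mathcal F_t$. *)

theory Defs
  imports "HOL-Probability.Probability"
begin

definition regular_cond_distr :: "'a measure \<Rightarrow> 'a measure \<Rightarrow> ('a \<Rightarrow> 'a measure) \<Rightarrow> bool" where
  "regular_cond_distr M G K \<longleftrightarrow>
     K \<in> measurable G (prob_algebra M) \<and>
     (\<forall>A\<in>sets M. AE \<omega> in M. measure (K \<omega>) A = real_cond_exp M G (indicator A) \<omega>)"

definition filtration_upto :: "'a measure \<Rightarrow> (nat \<Rightarrow> 'a measure) \<Rightarrow> nat \<Rightarrow> bool" where
  "filtration_upto M F T \<longleftrightarrow>
     (\<forall>s\<le>T. subalgebra M (F s)) \<and> (\<forall>s s'. s \<le> s' \<longrightarrow> s' \<le> T \<longrightarrow> sets (F s) \<subseteq> sets (F s'))"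

end

theory Submission
  imports Defs
begin


lemma integral_measurable_subprob_algebra2':
  fixes f :: "'a \<Rightarrow> 'b \<Rightarrow> real"
  assumes f: "(\<lambda>(x, y). f x y) \<in> borel_measurable (M \<Otimes>\<^sub>M N)"
  assumes L: "L \<in> measurable M (subprob_algebra N)"
  shows "(\<lambda>x. integral\<^sup>L (L x) (f x)) \<in> borel_measurable M"
proof -
  have P: "(\<lambda>(x, y). (x, y)) \<in> measurable (M \<Otimes>\<^sub>M N) (M \<Otimes>\<^sub>M N)"
    by (simp add: case_prod_Pair)
  have "(\<lambda>x. distr (L x) (M \<Otimes>\<^sub>M N) (Pair x)) \<in> measurable M (subprob_algebra (M \<Otimes>\<^sub>M N))"
    by (rule measurable_distr2[OF P L])
  from measurable_compose[OF this integral_measurable_subprob_algebra[OF f]]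
  have "(\<lambda>x. integral\<^sup>L (distr (L x) (M \<Otimes>\<^sub>M N) (Pair x)) (\<lambda>(x, y). f x y)) \<in> borel_measurable M" .
  then show ?thesis
  proof (rule measurable_cong[THEN iffD1, rotated])
    fix x assume x: "x \<in> space M"
    have "sets (L x) = sets N" using sets_kernel[OF L x] .
    have Pm: "Pair x \<in> measurable (L x) (M \<Otimes>\<^sub>M N)"
      unfolding measurable_cong_sets[OF \<open>sets (L x) = sets N\<close> refl]
      by (rule measurable_Pair1'[OF x])
    show "integral\<^sup>L (distr (L x) (M \<Otimes>\<^sub>M N) (Pair x)) (\<lambda>(x, y). f x y) = integral\<^sup>L (L x) (f x)"
      by (simp add: integral_distr[OF Pm f])
  qed
qed



lemma diag_disint:
  fixes h :: "'a \<times> 'a \<Rightarrow> real"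
  assumes P: "prob_space M" and S: "subalgebra M G"
    and KM: "K \<in> measurable G (prob_algebra M)"
    and KC: "\<forall>A\<in>sets M. AE \<omega> in M. measure (K \<omega>) A = real_cond_exp M G (indicator A) \<omega>"
    and hm[measurable]: "h \<in> borel_measurable (G \<Otimes>\<^sub>M M)"
    and hb: "\<And>z. z \<in> space (G \<Otimes>\<^sub>M M) \<Longrightarrow> \<bar>h z\<bar> \<le> B"
  shows "(\<integral>\<omega>. h (\<omega>, \<omega>) \<partial>M) = (\<integral>\<omega>. (\<integral>\<omega>'. h (\<omega>, \<omega>') \<partial>K \<omega>) \<partial>M)"
proof -
  interpret prob_space M by (rule P)
  have ne: "space M \<noteq> {}" using P by (rule prob_space.not_empty)
  interpret FS: finite_measure_subalgebra M G
    by unfold_locales (rule S)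
  have spG: "space G = space M" and setsG: "sets G \<subseteq> sets M" using S unfolding subalgebra_def by auto
  have KS[measurable]: "K \<in> measurable G (subprob_algebra M)" using KM by (rule measurable_prob_algebraD)
  have Kx: "sets (K \<omega>) = sets M" "prob_space (K \<omega>)" "space (K \<omega>) = space M" if "\<omega> \<in> space M" for \<omega>
  proof -
    have "K \<omega> \<in> space (prob_algebra M)" using measurable_space[OF KM] that spG by auto
    then show s: "sets (K \<omega>) = sets M" and "prob_space (K \<omega>)" by (auto simp: space_prob_algebra)
    from s show "space (K \<omega>) = space M" by (rule sets_eq_imp_space_eq)
  qed
  define R where "R = restr_to_subalg M G"
  have setsR: "sets R = sets G" unfolding R_def by (rule sets_restr_to_subalg[OF S])
  have spR: "space R = space M" unfolding R_def by (rule space_restr_to_subalg)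
  have finR: "finite_measure R" unfolding R_def by (rule finite_measure_restr_to_subalg[OF S]) (rule finite_measure_axioms)
  have diagm[measurable]: "(\<lambda>\<omega>. (\<omega>, \<omega>)) \<in> measurable M (G \<Otimes>\<^sub>M M)"
  proof (rule measurable_Pair)
    show "(\<lambda>x. x) \<in> measurable M G" using measurable_from_subalg[OF S measurable_ident_sets[OF refl]] .
  qed simp
  define L where "L = (\<lambda>\<omega>. distr (K \<omega>) (G \<Otimes>\<^sub>M M) (Pair \<omega>))"
  have LG: "L \<in> measurable G (subprob_algebra (G \<Otimes>\<^sub>M M))"
    unfolding L_def by (rule measurable_distr2[OF _ KS]) simp
  have LR: "L \<in> measurable R (subprob_algebra (G \<Otimes>\<^sub>M M))"
    using LG by (simp add: measurable_cong_sets[OF setsR refl])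
  define N1 where "N1 = distr M (G \<Otimes>\<^sub>M M) (\<lambda>\<omega>. (\<omega>, \<omega>))"
  define N2 where "N2 = R \<bind> L"
  have sN2: "sets N2 = sets (G \<Otimes>\<^sub>M M)" unfolding N2_def
  proof (rule sets_bind)
    fix x assume "x \<in> space R" then show "sets (L x) = sets (G \<Otimes>\<^sub>M M)" by (rule sets_kernel[OF LR])
  next
    show "space R \<noteq> {}" using ne spR by simp
  qed
  have N12: "N1 = N2"
  proof (rule measure_eqI_generator_eq[OF Int_stable_pair_measure_generator pair_measure_closed,
        where A="\<lambda>_. space G \<times> space M"])
    show "sets N1 = sigma_sets (space G \<times> space M) {a \<times> b |a b. a \<in> sets G \<and> b \<in> sets M}"
      unfolding N1_def by (simp add: sets_pair_measure)
    show "sets N2 = sigma_sets (space G \<times> space M) {a \<times> b |a b. a \<in> sets G \<and> b \<in> sets M}"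
      using sN2 by (simp add: sets_pair_measure)
    show "range (\<lambda>_. space G \<times> space M) \<subseteq> {a \<times> b |a b. a \<in> sets G \<and> b \<in> sets M}" by auto
    show "(\<Union>i. space G \<times> space M) = space G \<times> space M" by simp
    show "emeasure N1 (space G \<times> space M) \<noteq> \<infinity>" for i :: nat
      unfolding N1_def by (simp add: emeasure_distr)
  next
    fix X assume "X \<in> {a \<times> b |a b. a \<in> sets G \<and> b \<in> sets M}"
    then obtain B A where X: "X = B \<times> A" and B: "B \<in> sets G" and A: "A \<in> sets M" by auto
    have BM: "B \<in> sets M" using B setsG by auto
    have XS: "X \<in> sets (G \<Otimes>\<^sub>M M)" using X A B by auto
    have Bsp: "B \<subseteq> space M" using sets.sets_into_space[OF BM] .
    have [measurable]: "B \<in> sets G" "A \<in> sets M" "B \<in> sets M" using A B BM by auto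
    have mK0[measurable]: "(\<lambda>\<omega>. measure (K \<omega>) A) \<in> borel_measurable G"
      using measurable_measure_subprob_algebra[OF A] KS by (rule measurable_compose[rotated])
    have "(\<lambda>\<omega>. indicator B \<omega> * measure (K \<omega>) A) \<in> borel_measurable G" by measurable
    then have mmM[measurable]: "(\<lambda>\<omega>. indicator B \<omega> * measure (K \<omega>) A) \<in> borel_measurable M"
      by (rule measurable_from_subalg[OF S])
    have mcM[measurable]: "(\<lambda>\<omega>. indicator B \<omega> * real_cond_exp M G (indicator A) \<omega>) \<in> borel_measurable M"
      by measurable
    have "emeasure N1 X = emeasure M (B \<inter> A)"
      using XS Bsp sets.sets_into_space[OF BM]
    proof -
      have "(\<lambda>\<omega>. (\<omega>, \<omega>)) -` X \<inter> space M = B \<inter> A" using Bsp by (auto simp: X)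
      then show ?thesis by (simp add: N1_def emeasure_distr[OF diagm XS])
    qed
    also have "\<dots> = ennreal (\<integral>\<omega>. indicator B \<omega> * indicator A \<omega> \<partial>M)"
      using BM A by (simp add: emeasure_eq_measure indicator_inter_arith[symmetric])
    also have "(\<integral>\<omega>. indicator B \<omega> * indicator A \<omega> \<partial>M) = (\<integral>\<omega>\<in>B. (indicator A \<omega> :: real) \<partial>M)"
      unfolding set_lebesgue_integral_def by (simp add: mult.commute)
    also have "\<dots> = (\<integral>\<omega>\<in>B. real_cond_exp M G (indicator A) \<omega> \<partial>M)"
      using A B by (intro FS.real_cond_exp_intA integrable_real_indicator) (auto simp: less_top[symmetric])
    also have "\<dots> = (\<integral>\<omega>. indicator B \<omega> * measure (K \<omega>) A \<partial>M)"
      unfolding set_lebesgue_integral_def real_scaleR_def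
    proof (rule integral_cong_AE)
      show "AE x in M. indicator B x * real_cond_exp M G (indicator A) x = indicator B x * measure (K x) A"
        using KC[rule_format, OF A] by (rule eventually_mono) simp
    qed (insert mcM mmM, simp_all)
    also have "ennreal \<dots> = (\<integral>\<^sup>+\<omega>. ennreal (indicator B \<omega> * measure (K \<omega>) A) \<partial>M)"
    proof (rule nn_integral_eq_integral[symmetric])
      have mle: "\<And>\<omega>. \<omega> \<in> space M \<Longrightarrow> measure (K \<omega>) A \<le> 1"
        using Kx(2) prob_space.prob_le_1 by blast
      show "integrable M (\<lambda>\<omega>. indicator B \<omega> * measure (K \<omega>) A)"
        by (rule integrable_const_bound[where B=1, OF _ mmM]) (auto intro!: AE_I2 simp: indicator_def mle)
    qed (auto simp: indicator_def)
    also have "\<dots> = (\<integral>\<^sup>+\<omega>. ennreal (indicator B \<omega> * measure (K \<omega>) A) \<partial>R)"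
    proof -
      show ?thesis unfolding R_def by (rule nn_integral_subalgebra2[OF S, symmetric]) measurable
    qed
    also have "\<dots> = (\<integral>\<^sup>+\<omega>. emeasure (L \<omega>) X \<partial>R)"
    proof (rule nn_integral_cong)
      fix \<omega> assume w: "\<omega> \<in> space R"
      then have wM: "\<omega> \<in> space M" by (simp add: spR)
      interpret Kw: prob_space "K \<omega>" using Kx(2)[OF wM] .
      have "emeasure (L \<omega>) X = emeasure (K \<omega>) (Pair \<omega> -` X \<inter> space (K \<omega>))"
      proof -
        have Pm: "Pair \<omega> \<in> measurable (K \<omega>) (G \<Otimes>\<^sub>M M)"
          unfolding measurable_cong_sets[OF Kx(1)[OF wM] refl]
          by (rule measurable_Pair1') (simp add: spG wM)
        show ?thesis unfolding L_def by (rule emeasure_distr[OF Pm XS])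
      qed
      also have "\<dots> = indicator B \<omega> * emeasure (K \<omega>) A"
      proof -
        have "Pair \<omega> -` X \<inter> space (K \<omega>) = (if \<omega> \<in> B then A else {})"
          using sets.sets_into_space[OF A] Kx(3)[OF wM] by (auto simp: X)
        then show ?thesis by (simp add: indicator_def)
      qed
      finally show "ennreal (indicator B \<omega> * measure (K \<omega>) A) = emeasure (L \<omega>) X"
        using A Kx[OF wM] by (cases "\<omega> \<in> B") (simp_all add: Kw.emeasure_eq_measure)
    qed
    also have "\<dots> = emeasure N2 X"
    proof -
      have "space R \<noteq> {}" using ne spR by simp
      then show ?thesis unfolding N2_def by (rule emeasure_bind[symmetric, OF _ LR XS])
    qed
    finally show "emeasure N1 X = emeasure N2 X" .
  qed
  have "(\<integral>\<omega>. h (\<omega>, \<omega>) \<partial>M) = integral\<^sup>L N1 h"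
    unfolding N1_def by (simp add: integral_distr[OF diagm hm])
  also have "\<dots> = integral\<^sup>L N2 h" using N12 by simp
  also have "\<dots> = (\<integral>\<omega>. integral\<^sup>L (L \<omega>) h \<partial>R)"
    unfolding N2_def
  proof (rule integral_bind[OF hm hb LR finR, where B'=1])
    show "AE x in R. emeasure (L x) (space (L x)) \<le> ennreal 1"
    proof (rule AE_I2)
      fix x assume "x \<in> space R"
      then have "L x \<in> space (subprob_algebra (G \<Otimes>\<^sub>M M))" using measurable_space[OF LR] by blast
      then show "emeasure (L x) (space (L x)) \<le> ennreal 1"
        by (simp add: space_subprob_algebra subprob_space.subprob_emeasure_le_1)
    qed
  qed
  also have "\<dots> = (\<integral>\<omega>. (\<integral>\<omega>'. h (\<omega>, \<omega>') \<partial>K \<omega>) \<partial>R)"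
  proof (rule Bochner_Integration.integral_cong[OF refl])
    fix \<omega> assume w: "\<omega> \<in> space R"
    then have wM: "\<omega> \<in> space M" by (simp add: spR)
    show "integral\<^sup>L (L \<omega>) h = (\<integral>\<omega>'. h (\<omega>, \<omega>') \<partial>K \<omega>)"
    proof -
      have Pm: "Pair \<omega> \<in> measurable (K \<omega>) (G \<Otimes>\<^sub>M M)"
        unfolding measurable_cong_sets[OF Kx(1)[OF wM] refl]
        by (rule measurable_Pair1') (simp add: spG wM)
      show ?thesis unfolding L_def by (simp add: integral_distr[OF Pm hm])
    qed
  qed
  also have "\<dots> = (\<integral>\<omega>. (\<integral>\<omega>'. h (\<omega>, \<omega>') \<partial>K \<omega>) \<partial>M)"
    unfolding R_def
  proof (rule integral_subalgebra2[OF S])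
    show "(\<lambda>\<omega>. \<integral>\<omega>'. h (\<omega>, \<omega>') \<partial>K \<omega>) \<in> borel_measurable G"
      by (rule integral_measurable_subprob_algebra2'[OF _ KS]) (simp add: case_prod_eta hm)
  qed
  finally show ?thesis .
qed



lemma kint_bounds:
  fixes f :: "'a \<Rightarrow> real"
  assumes "prob_space N" "f \<in> borel_measurable N" "\<And>x. x \<in> space N \<Longrightarrow> a \<le> f x \<and> f x \<le> b"
  shows "a \<le> integral\<^sup>L N f \<and> integral\<^sup>L N f \<le> b"
proof -
  interpret N: prob_space N by fact
  have i: "integrable N f"
    by (rule N.integrable_const_bound[where B="max \<bar>a\<bar> \<bar>b\<bar>", OF _ assms(2)])
       (rule AE_I2, use assms(3) in force)
  show ?thesis
    using N.integral_ge_const[OF i, of a] N.integral_le_const[OF i, of b] assms(3)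
    by (auto intro!: AE_I2)
qed

lemma cond_exp_disint:
  fixes H :: "real \<Rightarrow> 'a \<Rightarrow> real" and X :: "'a \<Rightarrow> real"
  assumes P: "prob_space M" and S: "subalgebra M G"
    and KM: "K \<in> measurable G (prob_algebra M)"
    and KC: "\<forall>A\<in>sets M. AE \<omega> in M. measure (K \<omega>) A = real_cond_exp M G (indicator A) \<omega>"
    and Hm: "(\<lambda>(x, \<omega>). H x \<omega>) \<in> borel_measurable (borel \<Otimes>\<^sub>M M)"
    and Hb: "\<And>x \<omega>. \<omega> \<in> space M \<Longrightarrow> \<bar>H x \<omega>\<bar> \<le> B"
    and Xm: "X \<in> borel_measurable G"
  shows "AE \<omega> in M. real_cond_exp M G (\<lambda>\<omega>'. H (X \<omega>') \<omega>') \<omega> = (\<integral>\<omega>'. H (X \<omega>) \<omega>' \<partial>K \<omega>)"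
proof -
  interpret prob_space M by (rule P)
  interpret FS: finite_measure_subalgebra M G
    by unfold_locales (rule S)
  have spG: "space G = space M" using S unfolding subalgebra_def by auto
  have KS: "K \<in> measurable G (subprob_algebra M)" using KM by (rule measurable_prob_algebraD)
  have Kx: "sets (K \<omega>) = sets M" "prob_space (K \<omega>)" "space (K \<omega>) = space M" if "\<omega> \<in> space M" for \<omega>
  proof -
    have "K \<omega> \<in> space (prob_algebra M)" using measurable_space[OF KM] that spG by auto
    then show s: "sets (K \<omega>) = sets M" and "prob_space (K \<omega>)" by (auto simp: space_prob_algebra)
    from s show "space (K \<omega>) = space M" by (rule sets_eq_imp_space_eq)
  qed
  have XmM: "X \<in> borel_measurable M" by (rule measurable_from_subalg[OF S Xm])
  have idG: "(\<lambda>x. x) \<in> measurable M G" using measurable_from_subalg[OF S measurable_ident_sets[OF refl]] .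
  define h where "h = (\<lambda>z. H (X (fst z)) (snd z))"
  have inner1: "(\<lambda>z. (X (fst z), snd z)) \<in> measurable (G \<Otimes>\<^sub>M M) (borel \<Otimes>\<^sub>M M)"
    by (rule measurable_Pair[OF measurable_compose[OF measurable_fst Xm] measurable_snd])
  have hm: "h \<in> borel_measurable (G \<Otimes>\<^sub>M M)"
    using measurable_compose[OF inner1 Hm] by (simp add: h_def)
  have inner2: "(\<lambda>\<omega>. (X \<omega>, \<omega>)) \<in> measurable M (borel \<Otimes>\<^sub>M M)"
    by (rule measurable_Pair[OF XmM measurable_ident_sets[OF refl]])
  have fm: "(\<lambda>\<omega>. H (X \<omega>) \<omega>) \<in> borel_measurable M"
    using measurable_compose[OF inner2 Hm] by simp
  have hcase: "(\<lambda>(x, y). H (X x) y) = h" by (auto simp: h_def fun_eq_iff)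
  have gm: "(\<lambda>\<omega>. \<integral>\<omega>'. H (X \<omega>) \<omega>' \<partial>K \<omega>) \<in> borel_measurable G"
    by (rule integral_measurable_subprob_algebra2'[OF _ KS]) (simp add: hcase hm)
  have gmM: "(\<lambda>\<omega>. \<integral>\<omega>'. H (X \<omega>) \<omega>' \<partial>K \<omega>) \<in> borel_measurable M"
    by (rule measurable_from_subalg[OF S gm])
  have Hxm: "(\<lambda>\<omega>. H x \<omega>) \<in> borel_measurable M" for x
    using measurable_Pair2[OF Hm, of x] by simp
  have gb: "\<bar>\<integral>\<omega>'. H (X \<omega>) \<omega>' \<partial>K \<omega>\<bar> \<le> B" if w: "\<omega> \<in> space M" for \<omega>
  proof -
    have "H (X \<omega>) \<in> borel_measurable (K \<omega>)"
      using Hxm[of "X \<omega>"] by (simp add: measurable_cong_sets[OF Kx(1)[OF w] refl])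
    moreover have "-B \<le> H (X \<omega>) x \<and> H (X \<omega>) x \<le> B" if "x \<in> space (K \<omega>)" for x
    proof -
      have "\<bar>H (X \<omega>) x\<bar> \<le> B" using Hb that Kx(3)[OF w] by simp
      then show ?thesis by linarith
    qed
    ultimately have "-B \<le> (\<integral>\<omega>'. H (X \<omega>) \<omega>' \<partial>K \<omega>) \<and> (\<integral>\<omega>'. H (X \<omega>) \<omega>' \<partial>K \<omega>) \<le> B"
      using kint_bounds[OF Kx(2)[OF w]] by blast
    then show ?thesis by linarith
  qed
  have fi: "integrable M (\<lambda>\<omega>. H (X \<omega>) \<omega>)"
    by (rule integrable_const_bound[where B=B, OF _ fm]) (auto intro!: AE_I2 simp: Hb)
  have gi: "integrable M (\<lambda>\<omega>. \<integral>\<omega>'. H (X \<omega>) \<omega>' \<partial>K \<omega>)"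
    by (rule integrable_const_bound[where B=B, OF _ gmM]) (auto intro!: AE_I2 simp: gb)
  show ?thesis
  proof (rule FS.real_cond_exp_charact[OF _ fi gi gm])
    fix A assume A: "A \<in> sets G"
    define h' where "h' = (\<lambda>z. indicator A (fst z) * h z)"
    have h'm: "h' \<in> borel_measurable (G \<Otimes>\<^sub>M M)"
      unfolding h'_def
      by (rule borel_measurable_times[OF measurable_compose[OF measurable_fst] hm])
         (rule borel_measurable_indicator[OF A])
    have h'b: "\<bar>h' z\<bar> \<le> B" if "z \<in> space (G \<Otimes>\<^sub>M M)" for z
    proof -
      have "snd z \<in> space M" using that by (auto simp: space_pair_measure)
      then have "\<bar>h z\<bar> \<le> B" by (simp add: h_def Hb)
      moreover have "0 \<le> B" using Hb[OF \<open>snd z \<in> space M\<close>] by (meson abs_ge_zero order_trans)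
      ultimately show ?thesis by (auto simp: h'_def indicator_def)
    qed
    have "(\<integral>\<omega>\<in>A. H (X \<omega>) \<omega> \<partial>M) = (\<integral>\<omega>. h' (\<omega>, \<omega>) \<partial>M)"
      unfolding set_lebesgue_integral_def by (simp add: h'_def h_def)
    also have "\<dots> = (\<integral>\<omega>. (\<integral>\<omega>'. h' (\<omega>, \<omega>') \<partial>K \<omega>) \<partial>M)"
      by (rule diag_disint[OF P S KM KC h'm h'b])
    also have "\<dots> = (\<integral>\<omega>\<in>A. (\<integral>\<omega>'. H (X \<omega>) \<omega>' \<partial>K \<omega>) \<partial>M)"
      unfolding set_lebesgue_integral_def
      by (simp add: h'_def h_def)
    finally show "(\<integral>\<omega>\<in>A. H (X \<omega>) \<omega> \<partial>M) = (\<integral>\<omega>\<in>A. (\<integral>\<omega>'. H (X \<omega>) \<omega>' \<partial>K \<omega>) \<partial>M)" .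
  qed
qed



theorem lemma2:
  fixes M :: "'a measure" and F :: "nat \<Rightarrow> 'a measure" and T t :: nat and \<pi> :: real
    and c :: "real \<Rightarrow> 'a \<Rightarrow> real" and \<alpha>1 :: "real \<Rightarrow> 'a \<Rightarrow> real"
    and K :: "'a \<Rightarrow> 'a measure" and \<epsilon> :: "'a \<Rightarrow> real"
  assumes "prob_space M"
    and "filtration_upto M F T"
    and "\<pi> > 0" and "t < T"
    and "(\<lambda>(a, \<omega>). c a \<omega>) \<in> borel_measurable (borel \<Otimes>\<^sub>M F t)"
    and "\<forall>\<omega>\<in>space M. mono (\<lambda>a. c a \<omega>) \<and> continuous_on UNIV (\<lambda>a. c a \<omega>)"
    and "(\<lambda>(x, \<omega>). \<alpha>1 x \<omega>) \<in> borel_measurable (borel \<Otimes>\<^sub>M M)"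
    and "\<forall>x. \<forall>\<omega>\<in>space M. 0 \<le> \<alpha>1 x \<omega> \<and> \<alpha>1 x \<omega> \<le> \<pi>"
    and "\<forall>\<omega>\<in>space M. mono (\<lambda>x. \<alpha>1 x \<omega>)"
    and "regular_cond_distr M (F t) K"
    and "\<epsilon> \<in> borel_measurable M"
    and "\<forall>\<omega>\<in>space M. continuous_on UNIV (\<lambda>x. \<integral>\<omega>'. \<alpha>1 (x + \<epsilon> \<omega>') \<omega>' \<partial>(K \<omega>))"
  shows "\<exists>\<alpha> :: real \<Rightarrow> 'a \<Rightarrow> real.
     ((\<lambda>(g, \<omega>). \<alpha> g \<omega>) \<in> borel_measurable (borel \<Otimes>\<^sub>M F t)
      \<and> (\<forall>g. \<forall>\<omega>\<in>space M. 0 \<le> \<alpha> g \<omega> \<and> \<alpha> g \<omega> \<le> \<pi>)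
      \<and> (\<forall>g. AE \<omega> in M. \<alpha> g \<omega> =
            real_cond_exp M (F t) (\<lambda>\<omega>'. \<alpha>1 (g - c (\<alpha> g \<omega>') \<omega>' + \<epsilon> \<omega>') \<omega>') \<omega>))
   \<and> (\<forall>\<alpha>' :: real \<Rightarrow> 'a \<Rightarrow> real.
        ((\<lambda>(g, \<omega>). \<alpha>' g \<omega>) \<in> borel_measurable (borel \<Otimes>\<^sub>M F t)
         \<and> (\<forall>g. \<forall>\<omega>\<in>space M. 0 \<le> \<alpha>' g \<omega> \<and> \<alpha>' g \<omega> \<le> \<pi>)
         \<and> (\<forall>g. AE \<omega> in M. \<alpha>' g \<omega> =
               real_cond_exp M (F t) (\<lambda>\<omega>'. \<alpha>1 (g - c (\<alpha>' g \<omega>') \<omega>' + \<epsilon> \<omega>') \<omega>') \<omega>))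
        \<longrightarrow> (\<forall>g. AE \<omega> in M. \<alpha>' g \<omega> = \<alpha> g \<omega>))
   \<and> (\<forall>\<omega>\<in>space M. mono (\<lambda>g. \<alpha> g \<omega>) \<and> continuous_on UNIV (\<lambda>g. \<alpha> g \<omega>))"
proof -
  note P = assms(1)
  note cm = assms(5) and cmc = assms(6) and a1m = assms(7) and a1b = assms(8) and a1mono = assms(9)
  note em = assms(11) and cont = assms(12)
  interpret prob_space M by (rule P)
  have S: "subalgebra M (F t)" using assms(2,4) unfolding filtration_upto_def by auto
  have KM: "K \<in> measurable (F t) (prob_algebra M)"
    and KC: "\<forall>A\<in>sets M. AE \<omega> in M. measure (K \<omega>) A = real_cond_exp M (F t) (indicator A) \<omega>"
    using assms(10) unfolding regular_cond_distr_def by auto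
  have spG: "space (F t) = space M" using S unfolding subalgebra_def by auto
  have KS: "K \<in> measurable (F t) (subprob_algebra M)" using KM by (rule measurable_prob_algebraD)
  have Kx: "sets (K \<omega>) = sets M" "prob_space (K \<omega>)" "space (K \<omega>) = space M" if "\<omega> \<in> space M" for \<omega>
  proof -
    have "K \<omega> \<in> space (prob_algebra M)" using measurable_space[OF KM] that spG by auto
    then show s: "sets (K \<omega>) = sets M" and "prob_space (K \<omega>)" by (auto simp: space_prob_algebra)
    from s show "space (K \<omega>) = space M" by (rule sets_eq_imp_space_eq)
  qed
  define H where "H = (\<lambda>x \<omega>'. \<alpha>1 (x + \<epsilon> \<omega>') \<omega>')"
  have inner: "(\<lambda>z::real \<times> 'a. (fst z + \<epsilon> (snd z), snd z)) \<in> measurable (borel \<Otimes>\<^sub>M M) (borel \<Otimes>\<^sub>M M)"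
    using em by measurable
  have Hm: "(\<lambda>(x, \<omega>). H x \<omega>) \<in> borel_measurable (borel \<Otimes>\<^sub>M M)"
    using measurable_compose[OF inner a1m] by (simp add: H_def case_prod_beta')
  have Hb: "\<bar>H x \<omega>\<bar> \<le> \<pi>" if "\<omega> \<in> space M" for x \<omega>
    using a1b that by (auto simp: H_def)
  have Hxm: "(\<lambda>\<omega>. H x \<omega>) \<in> borel_measurable M" for x
    using measurable_Pair2[OF Hm, of x] by simp
  have HxK: "H x \<in> borel_measurable (K \<omega>)" if "\<omega> \<in> space M" for x \<omega>
    using Hxm[of x] by (simp add: measurable_cong_sets[OF Kx(1)[OF that] refl])
  define \<phi> where "\<phi> x \<omega> = (\<integral>\<omega>'. H x \<omega>' \<partial>K \<omega>)" for x \<omega>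
  have \<phi>b: "0 \<le> \<phi> x \<omega> \<and> \<phi> x \<omega> \<le> \<pi>" if w: "\<omega> \<in> space M" for x \<omega>
    unfolding \<phi>_def
    by (rule kint_bounds[OF Kx(2)[OF w] HxK[OF w]]) (use a1b Kx(3)[OF w] in \<open>auto simp: H_def\<close>)
  have \<phi>mono: "\<phi> x \<omega> \<le> \<phi> y \<omega>" if w: "\<omega> \<in> space M" and xy: "x \<le> y" for x y \<omega>
  proof -
    interpret Kw: prob_space "K \<omega>" by (rule Kx(2)[OF w])
    have int: "integrable (K \<omega>) (H z)" for z
      by (rule Kw.integrable_const_bound[where B=\<pi>, OF _ HxK[OF w]]) (auto intro!: AE_I2 simp: Hb Kx(3)[OF w])
    show ?thesis unfolding \<phi>_def
    proof (rule integral_mono[OF int int])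
      fix \<omega>' assume "\<omega>' \<in> space (K \<omega>)"
      then have "\<omega>' \<in> space M" using Kx(3)[OF w] by simp
      then show "H x \<omega>' \<le> H y \<omega>'"
        using a1mono xy unfolding H_def mono_def by auto
    qed
  qed
  have \<phi>cont: "continuous_on UNIV (\<lambda>x. \<phi> x \<omega>)" if "\<omega> \<in> space M" for \<omega>
    using cont that by (simp add: \<phi>_def H_def)
  define \<Phi> where "\<Phi> g a \<omega> = \<phi> (g - c a \<omega>) \<omega>" for g a \<omega>
  define \<psi> where "\<psi> g a \<omega> = a - \<Phi> g a \<omega>" for g a \<omega>
  have \<psi>strict: "\<psi> g a \<omega> < \<psi> g b \<omega>" if w: "\<omega> \<in> space M" and ab: "a < b" for g a b \<omega>
  proof -
    have "c a \<omega> \<le> c b \<omega>" using cmc w ab unfolding mono_def by auto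
    then have "\<phi> (g - c b \<omega>) \<omega> \<le> \<phi> (g - c a \<omega>) \<omega>" by (intro \<phi>mono[OF w]) simp
    then show ?thesis using ab by (simp add: \<psi>_def \<Phi>_def)
  qed
  have \<psi>cont: "continuous_on UNIV (\<lambda>a. \<psi> g a \<omega>)" if w: "\<omega> \<in> space M" for g \<omega>
  proof -
    have cc: "continuous_on UNIV (\<lambda>a. c a \<omega>)" using cmc w by auto
    have "continuous_on UNIV (\<lambda>a. g - c a \<omega>)" by (intro continuous_intros cc)
    from continuous_on_compose2[OF \<phi>cont[OF w] this subset_UNIV]
    have "continuous_on UNIV (\<lambda>a. \<phi> (g - c a \<omega>) \<omega>)" .
    then show ?thesis unfolding \<psi>_def \<Phi>_def by (intro continuous_intros)
  qed
  have \<psi>ex: "\<exists>a. 0 \<le> a \<and> a \<le> \<pi> \<and> \<psi> g a \<omega> = 0" if w: "\<omega> \<in> space M" for g \<omega>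
  proof (rule IVT')
    show "\<psi> g 0 \<omega> \<le> 0" using \<phi>b[OF w] by (simp add: \<psi>_def \<Phi>_def)
    show "0 \<le> \<psi> g \<pi> \<omega>" using \<phi>b[OF w, of "g - c \<pi> \<omega>"] by (simp add: \<psi>_def \<Phi>_def)
    show "0 \<le> \<pi>" using assms(3) by simp
    show "continuous_on {0..\<pi>} (\<lambda>a. \<psi> g a \<omega>)" using \<psi>cont[OF w] by (rule continuous_on_subset) simp
  qed
  define \<alpha> where "\<alpha> g \<omega> = (THE a. \<psi> g a \<omega> = 0)" for g \<omega>
  have \<psi>uniq: "a = b" if "\<omega> \<in> space M" "\<psi> g a \<omega> = 0" "\<psi> g b \<omega> = 0" for g a b \<omega>
    using \<psi>strict[OF that(1), of a b g] \<psi>strict[OF that(1), of b a g] that(2,3)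
    by (cases a b rule: linorder_cases) auto
  have \<alpha>fix: "\<psi> g (\<alpha> g \<omega>) \<omega> = 0 \<and> 0 \<le> \<alpha> g \<omega> \<and> \<alpha> g \<omega> \<le> \<pi>" if w: "\<omega> \<in> space M" for g \<omega>
  proof -
    obtain a where a: "0 \<le> a" "a \<le> \<pi>" "\<psi> g a \<omega> = 0" using \<psi>ex[OF w] by blast
    have "\<alpha> g \<omega> = a" unfolding \<alpha>_def
      by (rule the_equality[where P="\<lambda>a. \<psi> g a \<omega> = 0", OF a(3)]) (use \<psi>uniq[OF w _ a(3)] in blast)
    then show ?thesis using a by simp
  qed
  have \<alpha>uniq: "a = \<alpha> g \<omega>" if w: "\<omega> \<in> space M" and "a = \<Phi> g a \<omega>" for g a \<omega>
    using \<psi>uniq[OF w _ conjunct1[OF \<alpha>fix[OF w]]] that(2) by (simp add: \<psi>_def)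
  have \<alpha>le: "\<alpha> g \<omega> \<le> q \<longleftrightarrow> 0 \<le> \<psi> g q \<omega>" if w: "\<omega> \<in> space M" for g q \<omega>
  proof
    assume "\<alpha> g \<omega> \<le> q"
    then show "0 \<le> \<psi> g q \<omega>"
      using \<psi>strict[OF w, of "\<alpha> g \<omega>" q g] \<alpha>fix[OF w, of g] by (cases "\<alpha> g \<omega> = q") auto
  next
    assume "0 \<le> \<psi> g q \<omega>"
    then show "\<alpha> g \<omega> \<le> q"
      using \<psi>strict[OF w, of q "\<alpha> g \<omega>" g] \<alpha>fix[OF w, of g] by force
  qed
  have \<alpha>less: "\<alpha> g \<omega> < q \<longleftrightarrow> 0 < \<psi> g q \<omega>" if w: "\<omega> \<in> space M" for g q \<omega>
  proof
    assume "\<alpha> g \<omega> < q"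
    then show "0 < \<psi> g q \<omega>"
      using \<psi>strict[OF w, of "\<alpha> g \<omega>" q g] \<alpha>fix[OF w, of g] by auto
  next
    assume "0 < \<psi> g q \<omega>"
    then show "\<alpha> g \<omega> < q"
      using \<psi>strict[OF w, of q "\<alpha> g \<omega>" g] \<alpha>fix[OF w, of g] by (cases "q = \<alpha> g \<omega>") force+
  qed
  have cq: "(\<lambda>\<omega>. c q \<omega>) \<in> borel_measurable (F t)" for q
    using measurable_Pair2[OF cm, of q] by simp
  have \<Phi>m: "(\<lambda>w. \<Phi> (fst w) q (snd w)) \<in> borel_measurable (borel \<Otimes>\<^sub>M F t)" for q
  proof -
    have L: "(\<lambda>w. K (snd w)) \<in> measurable (borel \<Otimes>\<^sub>M F t) (subprob_algebra M)"
      by (rule measurable_compose[OF measurable_snd KS])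
    have in2: "(\<lambda>z. (fst (fst z) - c q (snd (fst z)), snd z)) \<in> measurable ((borel \<Otimes>\<^sub>M F t) \<Otimes>\<^sub>M M) (borel \<Otimes>\<^sub>M M)"
    proof (rule measurable_Pair)
      have "(\<lambda>z. c q (snd (fst z))) \<in> borel_measurable ((borel \<Otimes>\<^sub>M F t) \<Otimes>\<^sub>M M)"
        by (rule measurable_compose[OF measurable_compose[OF measurable_fst measurable_snd] cq])
      then show "(\<lambda>z. fst (fst z) - c q (snd (fst z))) \<in> borel_measurable ((borel \<Otimes>\<^sub>M F t) \<Otimes>\<^sub>M M)"
        by (intro borel_measurable_diff) (rule measurable_compose[OF measurable_fst measurable_fst], simp)
    qed (rule measurable_snd)
    have "(\<lambda>(w, \<omega>'). H (fst w - c q (snd w)) \<omega>') \<in> borel_measurable ((borel \<Otimes>\<^sub>M F t) \<Otimes>\<^sub>M M)"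
      using measurable_compose[OF in2 Hm] by (simp add: case_prod_beta')
    from integral_measurable_subprob_algebra2'[OF this L]
    show ?thesis by (simp add: \<Phi>_def \<phi>_def)
  qed
  have \<alpha>m: "(\<lambda>(g, \<omega>). \<alpha> g \<omega>) \<in> borel_measurable (borel \<Otimes>\<^sub>M F t)"
    unfolding borel_measurable_iff_le
  proof
    fix q
    have "(\<lambda>w. q - \<Phi> (fst w) q (snd w)) \<in> borel_measurable (borel \<Otimes>\<^sub>M F t)"
      using \<Phi>m[of q] by (intro borel_measurable_diff) simp_all
    then have "{w \<in> space (borel \<Otimes>\<^sub>M F t). 0 \<le> q - \<Phi> (fst w) q (snd w)} \<in> sets (borel \<Otimes>\<^sub>M F t)"
      unfolding borel_measurable_iff_ge by blast
    also have "{w \<in> space (borel \<Otimes>\<^sub>M F t). 0 \<le> q - \<Phi> (fst w) q (snd w)}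
        = {w \<in> space (borel \<Otimes>\<^sub>M F t). (case w of (g, \<omega>) \<Rightarrow> \<alpha> g \<omega>) \<le> q}"
      using \<alpha>le by (auto simp: space_pair_measure spG \<psi>_def)
    finally show "{w \<in> space (borel \<Otimes>\<^sub>M F t). (case w of (g, \<omega>) \<Rightarrow> \<alpha> g \<omega>) \<le> q} \<in> sets (borel \<Otimes>\<^sub>M F t)" .
  qed
  have eqn: "AE \<omega> in M. real_cond_exp M (F t) (\<lambda>\<omega>'. \<alpha>1 (g - c (\<beta> g \<omega>') \<omega>' + \<epsilon> \<omega>') \<omega>') \<omega>
      = \<Phi> g (\<beta> g \<omega>) \<omega>"
    if \<beta>m: "(\<lambda>(g, \<omega>). \<beta> g \<omega>) \<in> borel_measurable (borel \<Otimes>\<^sub>M F t)" for \<beta> g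
  proof -
    have bg: "(\<lambda>\<omega>. \<beta> g \<omega>) \<in> borel_measurable (F t)"
      using measurable_Pair2[OF \<beta>m, of g] by simp
    have "(\<lambda>\<omega>. (\<beta> g \<omega>, \<omega>)) \<in> measurable (F t) (borel \<Otimes>\<^sub>M F t)"
      by (rule measurable_Pair[OF bg measurable_ident_sets[OF refl]])
    from measurable_compose[OF this cm]
    have "(\<lambda>\<omega>. c (\<beta> g \<omega>) \<omega>) \<in> borel_measurable (F t)" by simp
    then have Xm: "(\<lambda>\<omega>. g - c (\<beta> g \<omega>) \<omega>) \<in> borel_measurable (F t)" by (intro borel_measurable_diff) simp_all
    from cond_exp_disint[OF P S KM KC Hm Hb Xm]
    show ?thesis by (simp add: H_def \<Phi>_def \<phi>_def)
  qed
  have P1: "(\<lambda>(g, \<omega>). \<alpha> g \<omega>) \<in> borel_measurable (borel \<Otimes>\<^sub>M F t)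
      \<and> (\<forall>g. \<forall>\<omega>\<in>space M. 0 \<le> \<alpha> g \<omega> \<and> \<alpha> g \<omega> \<le> \<pi>)
      \<and> (\<forall>g. AE \<omega> in M. \<alpha> g \<omega> =
            real_cond_exp M (F t) (\<lambda>\<omega>'. \<alpha>1 (g - c (\<alpha> g \<omega>') \<omega>' + \<epsilon> \<omega>') \<omega>') \<omega>)"
  proof (intro conjI allI ballI)
    show "(\<lambda>(g, \<omega>). \<alpha> g \<omega>) \<in> borel_measurable (borel \<Otimes>\<^sub>M F t)" by (rule \<alpha>m)
    fix g
    { fix \<omega> assume w: "\<omega> \<in> space M"
      show "0 \<le> \<alpha> g \<omega>" "\<alpha> g \<omega> \<le> \<pi>" using \<alpha>fix[OF w, of g] by auto }
    show "AE \<omega> in M. \<alpha> g \<omega> = real_cond_exp M (F t) (\<lambda>\<omega>'. \<alpha>1 (g - c (\<alpha> g \<omega>') \<omega>' + \<epsilon> \<omega>') \<omega>') \<omega>"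
      using eqn[OF \<alpha>m, of g] AE_space
    proof eventually_elim
      case (elim \<omega>)
      then show ?case using \<alpha>fix[OF elim(2), of g] by (simp add: \<psi>_def)
    qed
  qed
  have P2: "\<forall>\<alpha>' :: real \<Rightarrow> 'a \<Rightarrow> real.
        ((\<lambda>(g, \<omega>). \<alpha>' g \<omega>) \<in> borel_measurable (borel \<Otimes>\<^sub>M F t)
         \<and> (\<forall>g. \<forall>\<omega>\<in>space M. 0 \<le> \<alpha>' g \<omega> \<and> \<alpha>' g \<omega> \<le> \<pi>)
         \<and> (\<forall>g. AE \<omega> in M. \<alpha>' g \<omega> =
               real_cond_exp M (F t) (\<lambda>\<omega>'. \<alpha>1 (g - c (\<alpha>' g \<omega>') \<omega>' + \<epsilon> \<omega>') \<omega>') \<omega>))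
        \<longrightarrow> (\<forall>g. AE \<omega> in M. \<alpha>' g \<omega> = \<alpha> g \<omega>)"
  proof (intro allI impI)
    fix \<alpha>' :: "real \<Rightarrow> 'a \<Rightarrow> real" and g
    assume h: "(\<lambda>(g, \<omega>). \<alpha>' g \<omega>) \<in> borel_measurable (borel \<Otimes>\<^sub>M F t)
         \<and> (\<forall>g. \<forall>\<omega>\<in>space M. 0 \<le> \<alpha>' g \<omega> \<and> \<alpha>' g \<omega> \<le> \<pi>)
         \<and> (\<forall>g. AE \<omega> in M. \<alpha>' g \<omega> =
               real_cond_exp M (F t) (\<lambda>\<omega>'. \<alpha>1 (g - c (\<alpha>' g \<omega>') \<omega>' + \<epsilon> \<omega>') \<omega>') \<omega>)"
    then have m': "(\<lambda>(g, \<omega>). \<alpha>' g \<omega>) \<in> borel_measurable (borel \<Otimes>\<^sub>M F t)"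
      and e': "AE \<omega> in M. \<alpha>' g \<omega> =
               real_cond_exp M (F t) (\<lambda>\<omega>'. \<alpha>1 (g - c (\<alpha>' g \<omega>') \<omega>' + \<epsilon> \<omega>') \<omega>') \<omega>"
      by auto
    show "AE \<omega> in M. \<alpha>' g \<omega> = \<alpha> g \<omega>"
      using e' eqn[OF m', of g] AE_space
    proof eventually_elim
      case (elim \<omega>)
      then show ?case using \<alpha>uniq[OF elim(3), of "\<alpha>' g \<omega>" g] by simp
    qed
  qed
  have P3: "\<forall>\<omega>\<in>space M. mono (\<lambda>g. \<alpha> g \<omega>) \<and> continuous_on UNIV (\<lambda>g. \<alpha> g \<omega>)"
  proof (intro ballI conjI)
    fix \<omega> assume w: "\<omega> \<in> space M"
    show "mono (\<lambda>g. \<alpha> g \<omega>)"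
    proof (rule monoI)
      fix g1 g2 :: real assume g12: "g1 \<le> g2"
      let ?q = "\<alpha> g2 \<omega>"
      have "\<Phi> g1 ?q \<omega> \<le> \<Phi> g2 ?q \<omega>" unfolding \<Phi>_def by (rule \<phi>mono[OF w]) (use g12 in simp)
      moreover have "\<psi> g2 ?q \<omega> = 0" using \<alpha>fix[OF w, of g2] by simp
      ultimately have "0 \<le> \<psi> g1 ?q \<omega>" by (simp add: \<psi>_def)
      then show "\<alpha> g1 \<omega> \<le> \<alpha> g2 \<omega>" using \<alpha>le[OF w] by blast
    qed
    have \<psi>g: "isCont (\<lambda>g. \<psi> g y \<omega>) g0" for y g0
    proof -
      have "continuous_on UNIV (\<lambda>g. g - c y \<omega>)" by (intro continuous_intros)
      from continuous_on_compose2[OF \<phi>cont[OF w] this subset_UNIV]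
      have "continuous_on UNIV (\<lambda>g. \<phi> (g - c y \<omega>) \<omega>)" .
      then have "continuous_on UNIV (\<lambda>g. \<psi> g y \<omega>)" unfolding \<psi>_def \<Phi>_def by (intro continuous_intros)
      then show ?thesis by (simp add: continuous_on_eq_continuous_at)
    qed
    show "continuous_on UNIV (\<lambda>g. \<alpha> g \<omega>)"
    proof (rule continuous_at_imp_continuous_on, intro ballI)
      fix g0 :: real
      have lim: "((\<lambda>g. \<psi> g y \<omega>) \<longlongrightarrow> \<psi> g0 y \<omega>) (at g0)" for y
        using \<psi>g unfolding isCont_def by blast
      show "isCont (\<lambda>g. \<alpha> g \<omega>) g0" unfolding isCont_def
      proof (rule order_tendstoI)
        fix y assume "y < \<alpha> g0 \<omega>"
        then have "\<psi> g0 y \<omega> < 0" using \<alpha>le[OF w, of g0 y] by linarith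
        from order_tendstoD(2)[OF lim this]
        show "eventually (\<lambda>g. y < \<alpha> g \<omega>) (at g0)"
        proof (rule eventually_mono)
          fix x assume "\<psi> x y \<omega> < 0"
          then show "y < \<alpha> x \<omega>" using \<alpha>le[OF w, of x y] by linarith
        qed
      next
        fix y assume "\<alpha> g0 \<omega> < y"
        then have "0 < \<psi> g0 y \<omega>" using \<alpha>less[OF w, of g0 y] by linarith
        from order_tendstoD(1)[OF lim this]
        show "eventually (\<lambda>g. \<alpha> g \<omega> < y) (at g0)"
        proof (rule eventually_mono)
          fix x assume "0 < \<psi> x y \<omega>"
          then show "\<alpha> x \<omega> < y" using \<alpha>less[OF w, of x y] by linarith
        qed
      qed
    qed
  qed
  show ?thesis
    by (rule exI[of _ \<alpha>], rule conjI[OF P1 conjI[OF P2 P3]])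
qed

end
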